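(* Let $G=(g_1,\dots,g_k)\in\mathbb{N}_0^k$ with $g_1>0$ and $c(G)=(c_2,\dots,c_k)$, and let $z_1=\gcd(G)$. Then $G$ is telescopic if and only if for each $i=2,\dots,k$ there exists $z_i\in\langle z_1\rangle$ (i.e. a non-negative multiple of $z_1$) such that $g_i=z_iC_{i,k}$, $\gcd(z_i/z_1,c_i)=1$, and $z_i\in\langle z_jC_{j,i-1}:1\le j<i\rangle$.
   Context: $\langle A\rangle$ is the set of $\mathbb{N}_0$-linear combinations of the elements of $A$. $G_i=(g_1,\dots,g_i)$, $d_i=\gcd(G_i)$, $c_j=d_{j-1}/d_j$ for $2\le j\le k$; $G$ is telescopic if $c_jg_j\in\langle G_{j-1}\rangle$ for all $2\le j\le k$. $C_{m,n}=\prod_{j=m+1}^n c_j$, with the empty product (when $n\le m$) equal to $1$. *)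

theory Defs
  imports Main
begin

text \<open>A sequence G = (g_1,...,g_k) is represented by g :: nat => nat, using indices 1..k.\<close>

definition in_monoid :: "(nat \<Rightarrow> nat) \<Rightarrow> nat set \<Rightarrow> nat \<Rightarrow> bool" where
  "in_monoid gen J x \<longleftrightarrow> (\<exists>l :: nat \<Rightarrow> nat. x = (\<Sum>j\<in>J. l j * gen j))"

definition dseq :: "(nat \<Rightarrow> nat) \<Rightarrow> nat \<Rightarrow> nat" where
  "dseq g i = Gcd (g ` {1..i})"

definition cseq :: "(nat \<Rightarrow> nat) \<Rightarrow> nat \<Rightarrow> nat" where
  "cseq g j = dseq g (j - 1) div dseq g j"

definition Cprod :: "(nat \<Rightarrow> nat) \<Rightarrow> nat \<Rightarrow> nat \<Rightarrow> nat" where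
  "Cprod g m n = (\<Prod>j\<in>{m+1..n}. cseq g j)"

definition telescopic :: "(nat \<Rightarrow> nat) \<Rightarrow> nat \<Rightarrow> bool" where
  "telescopic g k \<longleftrightarrow> (\<forall>j\<in>{2..k}. in_monoid g {1..j-1} (cseq g j * g j))"

end

theory Submission
  imports Defs
begin

lemma D_Suc: "dseq g (Suc i) = gcd (g (Suc i)) (dseq g i)"
proof -
  have "{1..Suc i} = insert (Suc i) {1..i}" by auto
  thus ?thesis by (simp add: dseq_def Gcd_insert)
qed

lemma D_pos: assumes "g 1 > 0" "i \<ge> 1" shows "dseq g i > 0"
proof -
  have "g 1 \<in> g ` {1..i}" using assms by auto
  hence "\<not> g ` {1..i} \<subseteq> {0}" using assms by (metis gr_implies_not0 singletonD subsetD)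
  thus ?thesis unfolding dseq_def by (metis Gcd_0_iff gr0I)
qed

lemma D_dvd: assumes "j \<in> {1..i}" shows "dseq g i dvd g j"
  unfolding dseq_def using assms by (simp add: Gcd_dvd)

lemma c_D: assumes "i \<ge> 2" shows "cseq g i * dseq g i = dseq g (i - 1)"
proof -
  obtain m where m: "i = Suc m" using assms by (cases i) auto
  have "dseq g i dvd dseq g m" unfolding m D_Suc by simp
  thus ?thesis unfolding cseq_def m by simp
qed

lemma C_D: assumes "1 \<le> m" "m \<le> n" shows "Cprod g m n * dseq g n = dseq g m"
  using assms(2)
proof (induction n rule: dec_induct)
  case base
  then show ?case by (simp add: Cprod_def)
next
  case (step n)
  have "Cprod g m (Suc n) = Cprod g m n * cseq g (Suc n)"
    unfolding Cprod_def using step by (simp add: prod.nat_ivl_Suc')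
  moreover have "cseq g (Suc n) * dseq g (Suc n) = dseq g n"
    using c_D[of "Suc n" g] step assms by simp
  ultimately show ?case using step by (metis mult.assoc)
qed

lemma monoid_scale:
  assumes a: "a > 0" and b: "(b::nat) > 0" and zX: "z * a = X * b"
    and gh: "\<And>j. j \<in> J \<Longrightarrow> gen j * a = h j * b"
  shows "in_monoid gen J z \<longleftrightarrow> in_monoid h J X"
proof -
  have key: "(\<Sum>j\<in>J. l j * gen j) * a = (\<Sum>j\<in>J. l j * h j) * b" for l
    by (simp add: sum_distrib_right mult.assoc gh cong: sum.cong)
  show ?thesis unfolding in_monoid_def
  proof
    assume "\<exists>l. z = (\<Sum>j\<in>J. l j * gen j)"
    then obtain l where "z = (\<Sum>j\<in>J. l j * gen j)" by blast
    hence "X * b = (\<Sum>j\<in>J. l j * h j) * b" using key[of l] zX by metis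
    hence "X = (\<Sum>j\<in>J. l j * h j)" using b by simp
    thus "\<exists>l. X = (\<Sum>j\<in>J. l j * h j)" by blast
  next
    assume "\<exists>l. X = (\<Sum>j\<in>J. l j * h j)"
    then obtain l where "X = (\<Sum>j\<in>J. l j * h j)" by blast
    hence "z * a = (\<Sum>j\<in>J. l j * gen j) * a" using key[of l] zX by metis
    hence "z = (\<Sum>j\<in>J. l j * gen j)" using a by simp
    thus "\<exists>l. z = (\<Sum>j\<in>J. l j * gen j)" by blast
  qed
qed

lemma common:
  assumes k: "k \<ge> 1" and g1: "g 1 > 0" and z1: "z 1 = dseq g k"
    and zg: "\<forall>i\<in>{2..k}. g i = z i * Cprod g i k"
    and i: "i \<in> {2..k}"
  shows "in_monoid g {1..i-1} (cseq g i * g i) \<longleftrightarrow>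
         in_monoid (\<lambda>j. z j * Cprod g j (i - 1)) {1..i-1} (z i)"
proof -
  have zD: "z j * dseq g j = g j * dseq g k" if "j \<in> {1..k}" for j
  proof (cases "j = 1")
    case True
    have "dseq g 1 = g 1" by (simp add: dseq_def)
    then show ?thesis using True z1 by simp
  next
    case False
    hence "g j = z j * Cprod g j k" using zg that by auto
    moreover have "Cprod g j k * dseq g k = dseq g j" using C_D that by auto
    ultimately show ?thesis by (metis mult.assoc)
  qed
  have Dk: "dseq g k > 0" using D_pos g1 k by auto
  have Di: "dseq g (i-1) > 0" using D_pos g1 i by auto
  have "in_monoid (\<lambda>j. z j * Cprod g j (i - 1)) {1..i-1} (z i) \<longleftrightarrow> in_monoid g {1..i-1} (cseq g i * g i)"
  proof (rule monoid_scale[OF Di Dk])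
    show "z i * dseq g (i - 1) = cseq g i * g i * dseq g k"
    proof -
      have "z i * dseq g (i - 1) = cseq g i * (z i * dseq g i)"
      proof -
        have i2: "2 \<le> i" using i by simp
        have "dseq g (i - 1) = cseq g i * dseq g i" using c_D[OF i2] by simp
        thus ?thesis by (simp only: ac_simps)
      qed
      also have "\<dots> = cseq g i * g i * dseq g k" using zD[of i] i by simp
      finally show ?thesis .
    qed
    fix j assume j: "j \<in> {1..i-1}"
    have "z j * Cprod g j (i - 1) * dseq g (i - 1) = z j * dseq g j"
      using C_D[of j "i-1" g] j by (simp add: mult.assoc)
    also have "\<dots> = g j * dseq g k" using zD j i by auto
    finally show "z j * Cprod g j (i - 1) * dseq g (i - 1) = g j * dseq g k" by simp
  qed
  thus ?thesis by blast
qed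

theorem mainTheorem9:
  fixes g :: "nat \<Rightarrow> nat" and k :: nat
  assumes "k \<ge> 1" and "g 1 > 0"
  shows "telescopic g k \<longleftrightarrow>
    (\<exists>z :: nat \<Rightarrow> nat. z 1 = dseq g k \<and>
       (\<forall>i\<in>{2..k}.
          (\<exists>n. z i = n * z 1) \<and>
          g i = z i * Cprod g i k \<and>
          gcd (z i div z 1) (cseq g i) = 1 \<and>
          in_monoid (\<lambda>j. z j * Cprod g j (i - 1)) {1..i-1} (z i)))"
proof
  assume T: "telescopic g k"
  define z where "z i = (if i = 1 then dseq g k else (g i div dseq g i) * dseq g k)" for i
  have Dk: "dseq g k > 0" using D_pos assms by auto
  have z1: "z 1 = dseq g k" by (simp add: z_def)
  have zg: "\<forall>i\<in>{2..k}. g i = z i * Cprod g i k"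
  proof
    fix i assume i: "i \<in> {2..k}"
    have "z i * Cprod g i k = (g i div dseq g i) * (Cprod g i k * dseq g k)"
      using i by (simp add: z_def ac_simps)
    also have "\<dots> = (g i div dseq g i) * dseq g i" using C_D[of i k g] i by simp
    also have "\<dots> = g i" using D_dvd[of i i g] i by simp
    finally show "g i = z i * Cprod g i k" by simp
  qed
  show "\<exists>z :: nat \<Rightarrow> nat. z 1 = dseq g k \<and>
       (\<forall>i\<in>{2..k}.
          (\<exists>n. z i = n * z 1) \<and>
          g i = z i * Cprod g i k \<and>
          gcd (z i div z 1) (cseq g i) = 1 \<and>
          in_monoid (\<lambda>j. z j * Cprod g j (i - 1)) {1..i-1} (z i))"
  proof (intro exI[of _ z] conjI ballI)
    show "z 1 = dseq g k" by (rule z1)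
    fix i assume i: "i \<in> {2..k}"
    show "\<exists>n. z i = n * z 1" using i by (simp add: z_def)
    show "g i = z i * Cprod g i k" using zg i by auto
    obtain m where m: "i = Suc m" using i by (cases i) auto
    have Dm: "dseq g m > 0" using D_pos assms m i by auto
    have "z i div z 1 = g i div dseq g i" using i Dk by (simp add: z_def)
    moreover have "cseq g i = dseq g m div dseq g i" by (simp add: cseq_def m)
    moreover have "coprime (g i div gcd (g i) (dseq g m)) (dseq g m div gcd (g i) (dseq g m))"
      using Dm by (intro div_gcd_coprime) simp
    moreover have "dseq g i = gcd (g i) (dseq g m)" using D_Suc[of g m] m by simp
    ultimately show "gcd (z i div z 1) (cseq g i) = 1"
      by (metis coprime_iff_gcd_eq_1)
    show "in_monoid (\<lambda>j. z j * Cprod g j (i - 1)) {1..i-1} (z i)"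
    proof -
      have "in_monoid g {1..i-1} (cseq g i * g i)" using T i unfolding telescopic_def by blast
      thus ?thesis using common[OF assms z1 zg i] by blast
    qed
  qed
next
  assume "\<exists>z :: nat \<Rightarrow> nat. z 1 = dseq g k \<and>
       (\<forall>i\<in>{2..k}.
          (\<exists>n. z i = n * z 1) \<and>
          g i = z i * Cprod g i k \<and>
          gcd (z i div z 1) (cseq g i) = 1 \<and>
          in_monoid (\<lambda>j. z j * Cprod g j (i - 1)) {1..i-1} (z i))"
  then obtain z where z1: "z 1 = dseq g k" and H: "\<forall>i\<in>{2..k}.
          (\<exists>n. z i = n * z 1) \<and>
          g i = z i * Cprod g i k \<and>
          gcd (z i div z 1) (cseq g i) = 1 \<and>
          in_monoid (\<lambda>j. z j * Cprod g j (i - 1)) {1..i-1} (z i)" by blast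
  have zg: "\<forall>i\<in>{2..k}. g i = z i * Cprod g i k" using H by blast
  show "telescopic g k" unfolding telescopic_def
  proof
    fix i assume i: "i \<in> {2..k}"
    have "in_monoid (\<lambda>j. z j * Cprod g j (i - 1)) {1..i-1} (z i)" using H i by blast
    thus "in_monoid g {1..i-1} (cseq g i * g i)" using common[OF assms z1 zg i] by blast
  qed
qed

end
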